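(* Let $\mathcal S$ be a system of pairwise compatible splits of a finite set $X$, and consider the arrangement $\mathcal A(\mathcal S)=\{H_\sigma\mid\sigma\in\mathcal S\}$ in $V_0(X)$. For each $\mathcal S'\subseteq\mathcal S$ one has $\bigcap_{\sigma\in\mathcal S'}H_\sigma=\langle\mathbbm 1_i-\mathbbm 1_j: i\sim_{\pi(\mathcal S')}j\rangle$, and the assignment $\pi(\mathcal S')\mapsto\bigcap_{\sigma\in\mathcal S'}H_\sigma$ is a well-defined poset isomorphism from $\operatorname{im}\pi=\{\pi(\mathcal S')\mid\mathcal S'\subseteq\mathcal S\}$ (ordered so that $\rho\le\rho'$ iff $\rho'$ refines $\rho$) onto the intersection poset $\mathscr L(\mathcal A(\mathcal S))$ (ordered by reverse inclusion). Consequently, identifying the ground set of the matroid of $\mathcal A(\mathcal S)$ with $\mathcal S$, its closure operator is $$\operatorname{cl}(\mathcal S')=\{\sigma\in\mathcal S\mid \pi(\mathcal S'\cup\{\sigma\})=\pi(\mathcal S')\}.$$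
   Context: $X$ finite, $n=|X|$, $\mathbbm 1_A:=\sum_{x\in A}\mathbbm 1_x$ in $\mathbb R^X$, $V_0(X)=\{x\in\mathbb R^X\mid\sum_ix_i=0\}$. A split $A|B$ is an unordered partition of $X$ into two nonempty blocks; $A|B$ and $C|D$ are compatible if one of $A\cap C,A\cap D,B\cap C,B\cap D$ is empty. For $\sigma=A|B$, $v_\sigma:=\tfrac{|B|}{n}\mathbbm 1_A-\tfrac{|A|}{n}\mathbbm 1_B$ and $H_\sigma:=\{x\in V_0(X)\mid\langle x,v_\sigma\rangle=0\}$. For $\mathcal S'\subseteq\mathcal S$, $\pi(\mathcal S')$ is the partition of $X$ into classes of the relation "$i,j$ lie on the same side of every split in $\mathcal S'$" (for $\mathcal S'=\emptyset$ this is the one-block partition). The intersection poset $\mathscr L(\mathcal A)$ is the set of all intersections of subsets of $\mathcal A$ (empty intersection $=V_0(X)$), ordered by reverse inclusion. The closure of $\mathcal S'$ in the matroid of the arrangement is the set of $\sigma\in\mathcal S$ with $\bigcap_{\tau\in\mathcal S'}H_\tau\subseteq H_\sigma$. *)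

theory Defs
  imports "HOL-Analysis.Analysis"
begin

text \<open>Ground set X is the universe of a finite type 'a; R^X is real^'a.\<close>

definition ind :: "'a::finite set \<Rightarrow> real^'a" where
  "ind A = (\<chi> i. if i \<in> A then 1 else 0)"

definition V0 :: "(real^'a::finite) set" where
  "V0 = {x. (\<Sum>i\<in>UNIV. x $ i) = 0}"

text \<open>A split A|B is represented as the unordered pair {A, B}.\<close>
definition is_split :: "'a::finite set set \<Rightarrow> bool" where
  "is_split s \<longleftrightarrow> (\<exists>A B. s = {A, B} \<and> A \<noteq> {} \<and> B \<noteq> {} \<and> A \<inter> B = {} \<and> A \<union> B = UNIV)"

definition compatible :: "'a::finite set set \<Rightarrow> 'a set set \<Rightarrow> bool" where
  "compatible s t \<longleftrightarrow> (\<exists>P\<in>s. \<exists>Q\<in>t. P \<inter> Q = {})"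

definition split_vec :: "'a::finite set \<Rightarrow> 'a set \<Rightarrow> real^'a" where
  "split_vec A B = (real (card B) / real CARD('a)) *\<^sub>R ind A
                   - (real (card A) / real CARD('a)) *\<^sub>R ind B"

text \<open>H_sigma, computed from a chosen side A of sigma (the hyperplane does not
  depend on the choice, since swapping sides negates the normal vector).\<close>
definition H :: "'a::finite set set \<Rightarrow> (real^'a) set" where
  "H s = (let A = (SOME A. A \<in> s) in {x \<in> V0. x \<bullet> split_vec A (UNIV - A) = 0})"

definition Hint :: "'a::finite set set set \<Rightarrow> (real^'a) set" where
  "Hint S' = V0 \<inter> (\<Inter>s\<in>S'. H s)"

definition same_side :: "'a set set set \<Rightarrow> 'a \<Rightarrow> 'a \<Rightarrow> bool" where
  "same_side S' i j \<longleftrightarrow> (\<forall>s\<in>S'. \<forall>A\<in>s. i \<in> A \<longleftrightarrow> j \<in> A)"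

definition part :: "'a set set set \<Rightarrow> 'a set set" where
  "part S' = {{j. same_side S' i j} | i. True}"

definition refines :: "'a set set \<Rightarrow> 'a set set \<Rightarrow> bool" where
  "refines \<rho>' \<rho> \<longleftrightarrow> (\<forall>B\<in>\<rho>'. \<exists>C\<in>\<rho>. B \<subseteq> C)"

definition intersection_poset :: "'a::finite set set set \<Rightarrow> (real^'a) set set" where
  "intersection_poset S = {V0 \<inter> \<Inter>\<B> | \<B>. \<B> \<subseteq> H ` S}"

definition matroid_cl :: "'a::finite set set set \<Rightarrow> 'a set set set \<Rightarrow> 'a set set set" where
  "matroid_cl S S' = {s \<in> S. Hint S' \<subseteq> H s}"

end

theory Submission
  imports Defs
begin

definition blk :: "'a set set set \<Rightarrow> 'a \<Rightarrow> 'a set" where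
  "blk S' i = {j. same_side S' i j}"

lemma ss_refl: "same_side S' i i" by (simp add: same_side_def)
lemma ss_sym: "same_side S' i j \<Longrightarrow> same_side S' j i" by (simp add: same_side_def)
lemma ss_trans: "same_side S' i j \<Longrightarrow> same_side S' j k \<Longrightarrow> same_side S' i k"
  unfolding same_side_def by blast

lemma blk_eq: "same_side S' i j \<Longrightarrow> blk S' i = blk S' j"
  unfolding blk_def by (auto intro: ss_sym ss_trans)

lemma part_mem: "B \<in> part S' \<longleftrightarrow> (\<exists>k. B = blk S' k)"
  unfolding part_def blk_def by simp

lemma D_iff: "(\<exists>B\<in>part S'. i \<in> B \<and> j \<in> B) \<longleftrightarrow> same_side S' i j"
proof
  assume "\<exists>B\<in>part S'. i \<in> B \<and> j \<in> B"
  then obtain k where "i \<in> blk S' k" "j \<in> blk S' k" by (auto simp: part_mem)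
  then have "same_side S' k i" "same_side S' k j" unfolding blk_def by simp_all
  then show "same_side S' i j" by (meson ss_sym ss_trans)
next
  assume "same_side S' i j"
  then have "i \<in> blk S' i \<and> j \<in> blk S' i" unfolding blk_def using ss_refl by simp
  then show "\<exists>B\<in>part S'. i \<in> B \<and> j \<in> B" using part_mem by blast
qed

lemma D_eq: "{ind {i} - ind {j} | i j. \<exists>B\<in>part S'. i \<in> B \<and> j \<in> B}
    = {ind {i} - ind {j} | i j. same_side S' i j}"
  by (simp only: D_iff)

lemma ind_comp: "ind A $ k = (if k \<in> A then 1 else 0)"
  by (simp add: ind_def)

lemma inner_ind: "x \<bullet> ind A = sum (\<lambda>j. x $ j) A"
proof -
  have "x \<bullet> ind A = (\<Sum>k\<in>UNIV. if k \<in> A then x $ k else 0)"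
    unfolding inner_vec_def ind_def by (auto intro!: sum.cong)
  also have "\<dots> = sum (\<lambda>j. x $ j) A"
    by (simp add: sum.If_cases)
  finally show ?thesis .
qed

lemma split_sides: "is_split s \<Longrightarrow> Q \<in> s \<Longrightarrow> s = {Q, UNIV - Q} \<and> Q \<noteq> {} \<and> Q \<noteq> UNIV"
  unfolding is_split_def by blast

lemma side_sum:
  assumes "is_split s" "x \<in> H s" "Q \<in> s"
  shows "sum (\<lambda>j. x $ j) Q = 0"
proof -
  define A0 where "A0 = (SOME A. A \<in> s)"
  have A0s: "A0 \<in> s" unfolding A0_def using assms(3) by (rule someI)
  have xV: "x \<in> V0" and xi: "x \<bullet> split_vec A0 (UNIV - A0) = 0"
    using assms(2) unfolding H_def A0_def Let_def by auto
  let ?f = "\<lambda>j. x $ j"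
  have tot: "sum ?f UNIV = 0" using xV by (simp add: V0_def)
  have cB: "sum ?f (UNIV - A0) = - sum ?f A0"
    using tot sum_diff[of UNIV A0 ?f] by simp
  have "card A0 + card (UNIV - A0) = card (A0 \<union> (UNIV - A0))"
    by (rule card_Un_disjoint[symmetric]) auto
  then have "card A0 + card (UNIV - A0) = CARD('a)" by simp
  then have cc: "real (card A0) + real (card (UNIV - A0)) = real CARD('a)"
    by (metis of_nat_add)
  have n0: "real CARD('a) > 0" by simp
  have "x \<bullet> split_vec A0 (UNIV - A0) =
     (real (card (UNIV - A0)) / real CARD('a)) * sum ?f A0 - (real (card A0) / real CARD('a)) * sum ?f (UNIV - A0)"
    unfolding split_vec_def by (simp add: inner_diff_right inner_ind)
  also have "\<dots> = ((real (card A0) + real (card (UNIV - A0))) / real CARD('a)) * sum ?f A0"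
    unfolding cB by (simp add: add_divide_distrib algebra_simps)
  also have "\<dots> = sum ?f A0" using cc n0 by simp
  finally have z: "sum ?f A0 = 0" using xi by simp
  have "Q = A0 \<or> Q = UNIV - A0"
    using split_sides[OF assms(1) A0s] assms(3) by blast
  then show ?thesis using z cB by auto
qed

lemma blk_sum:
  assumes splits: "\<forall>s\<in>S'. is_split s"
    and compat: "\<forall>s\<in>S'. \<forall>t\<in>S'. compatible s t"
    and x: "x \<in> Hint S'"
  shows "sum (\<lambda>j. x $ j) (blk S' i) = 0"
proof -
  let ?f = "\<lambda>j. x $ j"
  define Qs where "Qs = {Q. \<exists>s\<in>S'. Q \<in> s \<and> i \<notin> Q}"
  define Mx where "Mx = {Q\<in>Qs. \<forall>Q'\<in>Qs. Q \<subseteq> Q' \<longrightarrow> Q' = Q}"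
  have xV: "x \<in> V0" using x by (simp add: Hint_def)
  have xH: "\<And>s. s \<in> S' \<Longrightarrow> x \<in> H s" using x by (simp add: Hint_def)
  have tot: "sum ?f UNIV = 0" using xV by (simp add: V0_def)
  have blkeq: "blk S' i = UNIV - \<Union>Qs"
  proof (rule set_eqI)
    fix j
    show "j \<in> blk S' i \<longleftrightarrow> j \<in> UNIV - \<Union>Qs"
    proof
      assume "j \<in> blk S' i"
      then show "j \<in> UNIV - \<Union>Qs" unfolding blk_def same_side_def Qs_def by blast
    next
      assume j: "j \<in> UNIV - \<Union>Qs"
      show "j \<in> blk S' i" unfolding blk_def same_side_def
      proof (intro CollectI ballI)
        fix s A assume s: "s \<in> S'" and A: "A \<in> s"
        have sA: "s = {A, UNIV - A}" using split_sides splits s A by blast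
        show "i \<in> A \<longleftrightarrow> j \<in> A"
        proof
          assume "i \<in> A"
          then have "UNIV - A \<in> Qs" unfolding Qs_def using s sA by blast
          then show "j \<in> A" using j by blast
        next
          assume "j \<in> A"
          then show "i \<in> A" using j s A unfolding Qs_def by blast
        qed
      qed
    qed
  qed
  have UM: "\<Union>Mx = \<Union>Qs"
  proof
    show "\<Union>Mx \<subseteq> \<Union>Qs" unfolding Mx_def by blast
    show "\<Union>Qs \<subseteq> \<Union>Mx"
    proof
      fix j assume "j \<in> \<Union>Qs"
      then obtain Q where Q: "Q \<in> Qs" "j \<in> Q" by blast
      obtain m where "m \<in> Qs" "Q \<subseteq> m" "\<forall>b\<in>Qs. m \<subseteq> b \<longrightarrow> m = b"
        using finite_has_maximal2[of Qs Q] Q by auto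
      then have "m \<in> Mx" unfolding Mx_def by auto
      then show "j \<in> \<Union>Mx" using Q \<open>Q \<subseteq> m\<close> by blast
    qed
  qed
  have disj: "\<forall>A\<in>Mx. \<forall>B\<in>Mx. A \<noteq> B \<longrightarrow> A \<inter> B = {}"
  proof (intro ballI impI)
    fix Q Q' assume Q: "Q \<in> Mx" and Q': "Q' \<in> Mx" and ne: "Q \<noteq> Q'"
    obtain s where s: "s \<in> S'" "Q \<in> s" "i \<notin> Q" using Q unfolding Mx_def Qs_def by blast
    obtain t where t: "t \<in> S'" "Q' \<in> t" "i \<notin> Q'" using Q' unfolding Mx_def Qs_def by blast
    have ss: "s = {Q, UNIV - Q}" using split_sides splits s by blast
    have tt: "t = {Q', UNIV - Q'}" using split_sides splits t by blast
    have mQ: "\<forall>R\<in>Qs. Q \<subseteq> R \<longrightarrow> R = Q" and mQ': "\<forall>R\<in>Qs. Q' \<subseteq> R \<longrightarrow> R = Q'"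
      and QQ: "Q \<in> Qs" "Q' \<in> Qs"
      using Q Q' unfolding Mx_def by auto
    obtain P P' where P: "P \<in> s" "P' \<in> t" "P \<inter> P' = {}"
      using compat s t unfolding compatible_def by blast
    have "P = Q \<or> P = UNIV - Q" "P' = Q' \<or> P' = UNIV - Q'" using P ss tt by auto
    then show "Q \<inter> Q' = {}"
    proof (elim disjE)
      assume "P = Q" "P' = Q'" then show ?thesis using P by simp
    next
      assume "P = Q" "P' = UNIV - Q'"
      then have "Q \<subseteq> Q'" using P by blast
      then show ?thesis using mQ QQ ne by blast
    next
      assume "P = UNIV - Q" "P' = Q'"
      then have "Q' \<subseteq> Q" using P by blast
      then show ?thesis using mQ' QQ ne by blast
    next
      assume "P = UNIV - Q" "P' = UNIV - Q'"
      then show ?thesis using P s t by blast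
    qed
  qed
  have zero: "\<And>Q. Q \<in> Mx \<Longrightarrow> sum ?f Q = 0"
  proof -
    fix Q assume "Q \<in> Mx"
    then obtain s where "s \<in> S'" "Q \<in> s" unfolding Mx_def Qs_def by blast
    then show "sum ?f Q = 0" using side_sum splits xH by blast
  qed
  have "sum ?f (\<Union>Mx) = sum (sum ?f) Mx"
    using sum.Union_disjoint[of Mx ?f] disj by simp
  also have "\<dots> = 0" using zero by simp
  finally have "sum ?f (\<Union>Qs) = 0" using UM by simp
  then show ?thesis unfolding blkeq using sum_diff[of UNIV "\<Union>Qs" ?f] tot by simp
qed

definition Dset :: "'a::finite set set set \<Rightarrow> (real^'a) set" where
  "Dset S' = {ind {i} - ind {j} | i j. same_side S' i j}"

lemma subspace_Hint: "subspace (Hint S')"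
  unfolding subspace_def Hint_def H_def Let_def V0_def
  by (auto simp: sum.distrib inner_add_left sum_distrib_left[symmetric])

lemma sum_ind_single: "(\<Sum>k\<in>UNIV. ind {i} $ k) = (1::real)"
  by (simp add: ind_comp)

lemma inner_ind_single: "v \<bullet> ind {i} = v $ i"
  by (simp add: inner_ind)

lemma gen_in_Hint:
  assumes splits: "\<forall>s\<in>S'. is_split s" and ss: "same_side S' i j"
  shows "ind {i} - ind {j} \<in> Hint S'"
proof -
  have V: "ind {i} - ind {j} \<in> V0"
    unfolding V0_def by (simp add: sum_subtractf sum_ind_single)
  have "ind {i} - ind {j} \<in> H s" if s: "s \<in> S'" for s
  proof -
    define A0 where "A0 = (SOME A. A \<in> s)"
    have "is_split s" using splits s by blast
    then obtain A B where "s = {A, B}" unfolding is_split_def by blast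
    then have A0s: "A0 \<in> s" unfolding A0_def by (metis insertI1 someI)
    have iff: "i \<in> A0 \<longleftrightarrow> j \<in> A0" using ss A0s s unfolding same_side_def by blast
    define v where "v = split_vec A0 (UNIV - A0)"
    have "v $ i = v $ j" unfolding v_def split_vec_def using iff by (simp add: ind_comp)
    then have "(ind {i} - ind {j}) \<bullet> v = 0"
      by (simp add: inner_diff_left inner_commute[of "ind _" v] inner_ind_single)
    then show ?thesis using V unfolding H_def Let_def A0_def[symmetric] v_def by simp
  qed
  then show ?thesis using V unfolding Hint_def by blast
qed

lemma span_sub_Hint:
  assumes "\<forall>s\<in>S'. is_split s"
  shows "span (Dset S') \<subseteq> Hint S'"
  by (rule span_minimal) (auto simp: Dset_def intro: gen_in_Hint[OF assms] subspace_Hint)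

lemma Z_sub_span:
  fixes x :: "real^'a::finite"
  assumes z: "\<forall>i. sum (\<lambda>j. x $ j) (blk S' i) = 0"
  shows "x \<in> span (Dset S')"
proof -
  define r where "r i = (SOME j. j \<in> blk S' i)" for i
  have rr: "same_side S' i (r i)" for i
  proof -
    have "i \<in> blk S' i" unfolding blk_def by (simp add: ss_refl)
    then have "r i \<in> blk S' i" unfolding r_def by (rule someI)
    then show ?thesis unfolding blk_def by simp
  qed
  have rc: "same_side S' i j \<Longrightarrow> r i = r j" for i j
    unfolding r_def using blk_eq by metis
  have fib: "(\<Sum>i\<in>{i. r i = k}. x $ i) = 0" for k
  proof (cases "\<exists>i0. r i0 = k")
    case False then show ?thesis by simp
  next
    case True
    then obtain i0 where i0: "r i0 = k" by blast
    have "{i. r i = k} = blk S' i0"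
    proof (rule set_eqI, rule iffI)
      fix i assume "i \<in> {i. r i = k}"
      then have "r i = r i0" using i0 by simp
      then have "same_side S' i0 i" using rr[of i] rr[of i0] by (metis ss_sym ss_trans)
      then show "i \<in> blk S' i0" unfolding blk_def by simp
    next
      fix i assume "i \<in> blk S' i0"
      then have "same_side S' i0 i" unfolding blk_def by simp
      then show "i \<in> {i. r i = k}" using rc i0 by fastforce
    qed
    then show ?thesis using z by simp
  qed
  have eq: "x = (\<Sum>i\<in>UNIV. x $ i *\<^sub>R (ind {i} - ind {r i}))"
  proof (subst vec_eq_iff, rule allI)
    fix k
    have "(\<Sum>i\<in>UNIV. x $ i *\<^sub>R (ind {i} - ind {r i})) $ k
        = (\<Sum>i\<in>UNIV. if i = k then x $ i else 0) - (\<Sum>i\<in>UNIV. if r i = k then x $ i else 0)"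
    proof -
      have "(\<Sum>i\<in>UNIV. x $ i *\<^sub>R (ind {i} - ind {r i})) $ k
          = (\<Sum>i\<in>UNIV. x $ i * ind {i} $ k - x $ i * ind {r i} $ k)"
        by (simp add: right_diff_distrib)
      also have "\<dots> = (\<Sum>i\<in>UNIV. x $ i * ind {i} $ k) - (\<Sum>i\<in>UNIV. x $ i * ind {r i} $ k)"
        by (rule sum_subtractf)
      also have "(\<Sum>i\<in>UNIV. x $ i * ind {i} $ k) = (\<Sum>i\<in>UNIV. if i = k then x $ i else 0)"
        by (rule sum.cong) (auto simp: ind_comp)
      also have "(\<Sum>i\<in>UNIV. x $ i * ind {r i} $ k) = (\<Sum>i\<in>UNIV. if r i = k then x $ i else 0)"
        by (rule sum.cong) (auto simp: ind_comp)
      finally show ?thesis .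
    qed
    also have "\<dots> = x $ k - (\<Sum>i\<in>{i. r i = k}. x $ i)"
      by (simp add: sum.inter_filter[symmetric])
    also have "\<dots> = x $ k" using fib by simp
    finally show "x $ k = (\<Sum>i\<in>UNIV. x $ i *\<^sub>R (ind {i} - ind {r i})) $ k" by simp
  qed
  have "(\<Sum>i\<in>UNIV. x $ i *\<^sub>R (ind {i} - ind {r i})) \<in> span (Dset S')"
    by (intro span_sum span_scale span_base) (auto simp: Dset_def intro: rr)
  then show ?thesis using eq by simp
qed

lemma Hint_eq:
  assumes splits: "\<forall>s\<in>S'. is_split s"
    and compat: "\<forall>s\<in>S'. \<forall>t\<in>S'. compatible s t"
  shows "Hint S' = span (Dset S')"
  using span_sub_Hint[OF splits] Z_sub_span blk_sum[OF splits compat] by blast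

lemma mem_iff:
  assumes splits: "\<forall>s\<in>S'. is_split s"
    and compat: "\<forall>s\<in>S'. \<forall>t\<in>S'. compatible s t"
  shows "ind {i} - ind {j} \<in> Hint S' \<longleftrightarrow> same_side S' i j"
proof
  assume "same_side S' i j" then show "ind {i} - ind {j} \<in> Hint S'" by (rule gen_in_Hint[OF splits])
next
  assume "ind {i} - ind {j} \<in> Hint S'"
  then have "sum (\<lambda>k. (ind {i} - ind {j}) $ k) (blk S' i) = 0" by (rule blk_sum[OF splits compat])
  then have "(if i \<in> blk S' i then 1 else 0) - (if j \<in> blk S' i then 1 else (0::real)) = 0"
    by (simp add: ind_comp sum_subtractf sum.If_cases)
  moreover have "i \<in> blk S' i" unfolding blk_def by (simp add: ss_refl)
  ultimately have "j \<in> blk S' i" by (cases "j \<in> blk S' i") auto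
  then show "same_side S' i j" unfolding blk_def by simp
qed

theorem mainTheorem7:
  fixes S :: "'a::finite set set set"
  assumes splits: "\<forall>s\<in>S. is_split s"
    and compat: "\<forall>s\<in>S. \<forall>t\<in>S. compatible s t"
  shows "(\<forall>S'\<subseteq>S. Hint S' =
            span {ind {i} - ind {j} | i j. \<exists>B\<in>part S'. i \<in> B \<and> j \<in> B})
    \<and> (\<exists>f. bij_betw f (part ` Pow S) (intersection_poset S)
           \<and> (\<forall>S'\<subseteq>S. f (part S') = Hint S')
           \<and> (\<forall>\<rho>\<in>part ` Pow S. \<forall>\<rho>'\<in>part ` Pow S.
                refines \<rho>' \<rho> \<longleftrightarrow> f \<rho>' \<subseteq> f \<rho>))
    \<and> (\<forall>S'\<subseteq>S. matroid_cl S S' = {s \<in> S. part (S' \<union> {s}) = part S'})"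
proof -
  have spl: "\<And>S'. S' \<subseteq> S \<Longrightarrow> \<forall>s\<in>S'. is_split s" using splits by blast
  have cmp: "\<And>S'. S' \<subseteq> S \<Longrightarrow> \<forall>s\<in>S'. \<forall>t\<in>S'. compatible s t" using compat by blast
  have HE: "Hint S' = span (Dset S')" if "S' \<subseteq> S" for S'
    using Hint_eq[OF spl[OF that] cmp[OF that]] .
  have MI: "ind {i} - ind {j} \<in> Hint S' \<longleftrightarrow> same_side S' i j" if "S' \<subseteq> S" for S' i j
    using mem_iff[OF spl[OF that] cmp[OF that]] .
  define f :: "'a set set \<Rightarrow> (real^'a) set"
    where "f \<rho> = span {ind {i} - ind {j} | i j. \<exists>B\<in>\<rho>. i \<in> B \<and> j \<in> B}" for \<rho>
  have fH: "f (part S') = Hint S'" if "S' \<subseteq> S" for S'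
    unfolding f_def D_eq HE[OF that] Dset_def ..
  have P1: "\<forall>S'\<subseteq>S. Hint S' =
            span {ind {i} - ind {j} | i j. \<exists>B\<in>part S'. i \<in> B \<and> j \<in> B}"
    using fH unfolding f_def by blast
  have partI: "part S1 = part S2" if "same_side S1 = same_side S2" for S1 S2 :: "'a set set set"
    unfolding part_def using that by simp
  have inj: "part S1 = part S2" if "S1 \<subseteq> S" "S2 \<subseteq> S" "Hint S1 = Hint S2" for S1 S2
  proof (rule partI, intro ext)
    fix i j show "same_side S1 i j = same_side S2 i j"
      using MI[OF that(1), of i j] MI[OF that(2), of i j] that(3) by simp
  qed
  have ord: "refines (part S2) (part S1) \<longleftrightarrow> Hint S2 \<subseteq> Hint S1"
    if S1: "S1 \<subseteq> S" and S2: "S2 \<subseteq> S" for S1 S2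
  proof
    assume r: "refines (part S2) (part S1)"
    have "same_side S1 i j" if "same_side S2 i j" for i j
    proof -
      have "blk S2 i \<in> part S2" unfolding part_mem by blast
      then obtain C where "C \<in> part S1" "blk S2 i \<subseteq> C" using r unfolding refines_def by blast
      then obtain k where C: "C = blk S1 k" "blk S2 i \<subseteq> C" by (auto simp: part_mem)
      have "i \<in> blk S2 i" "j \<in> blk S2 i" using that ss_refl unfolding blk_def by auto
      then have "same_side S1 k i" "same_side S1 k j" using C unfolding blk_def by auto
      then show ?thesis by (meson ss_sym ss_trans)
    qed
    then have "Dset S2 \<subseteq> Dset S1" unfolding Dset_def by blast
    then show "Hint S2 \<subseteq> Hint S1" using HE[OF S1] HE[OF S2] span_mono by metis
  next
    assume h: "Hint S2 \<subseteq> Hint S1"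
    have ss: "same_side S2 i j \<Longrightarrow> same_side S1 i j" for i j
      using MI[OF S1, of i j] MI[OF S2, of i j] h by blast
    show "refines (part S2) (part S1)" unfolding refines_def
    proof
      fix B assume "B \<in> part S2"
      then obtain k where B: "B = blk S2 k" by (auto simp: part_mem)
      have "blk S1 k \<in> part S1" unfolding part_mem by blast
      moreover have "B \<subseteq> blk S1 k" using B ss unfolding blk_def by blast
      ultimately show "\<exists>C\<in>part S1. B \<subseteq> C" by blast
    qed
  qed
  have img: "f ` (part ` Pow S) = intersection_poset S"
  proof
    show "f ` (part ` Pow S) \<subseteq> intersection_poset S"
    proof
      fix y assume "y \<in> f ` (part ` Pow S)"
      then obtain S' where S': "S' \<subseteq> S" "y = f (part S')" by blast
      then have "y = V0 \<inter> \<Inter>(H ` S')" using fH Hint_def by metis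
      moreover have "H ` S' \<subseteq> H ` S" using S' by blast
      ultimately show "y \<in> intersection_poset S" unfolding intersection_poset_def by blast
    qed
  next
    show "intersection_poset S \<subseteq> f ` (part ` Pow S)"
    proof
      fix y assume "y \<in> intersection_poset S"
      then obtain \<B> where B: "\<B> \<subseteq> H ` S" "y = V0 \<inter> \<Inter>\<B>" unfolding intersection_poset_def by blast
      define S' where "S' = {s\<in>S. H s \<in> \<B>}"
      have "H ` S' = \<B>" using B(1) unfolding S'_def by blast
      then have "y = Hint S'" using B(2) unfolding Hint_def by simp
      also have "\<dots> = f (part S')" using fH[of S'] unfolding S'_def by auto
      finally show "y \<in> f ` (part ` Pow S)" unfolding S'_def by blast
    qed
  qed
  have injf: "inj_on f (part ` Pow S)"
  proof (rule inj_onI)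
    fix x y assume "x \<in> part ` Pow S" "y \<in> part ` Pow S" "f x = f y"
    then obtain S1 S2 where "S1 \<subseteq> S" "S2 \<subseteq> S" "x = part S1" "y = part S2" "f x = f y" by blast
    then show "x = y" using inj fH by metis
  qed
  have P2: "\<exists>f. bij_betw f (part ` Pow S) (intersection_poset S)
           \<and> (\<forall>S'\<subseteq>S. f (part S') = Hint S')
           \<and> (\<forall>\<rho>\<in>part ` Pow S. \<forall>\<rho>'\<in>part ` Pow S.
                refines \<rho>' \<rho> \<longleftrightarrow> f \<rho>' \<subseteq> f \<rho>)"
  proof (intro exI conjI ballI allI impI)
    show "bij_betw f (part ` Pow S) (intersection_poset S)" using injf img by (simp add: bij_betw_def)
    show "\<And>S'. S' \<subseteq> S \<Longrightarrow> f (part S') = Hint S'" by (rule fH)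
    fix \<rho> \<rho>' assume "\<rho> \<in> part ` Pow S" "\<rho>' \<in> part ` Pow S"
    then obtain S1 S2 where "S1 \<subseteq> S" "S2 \<subseteq> S" "\<rho> = part S1" "\<rho>' = part S2" by blast
    then show "refines \<rho>' \<rho> \<longleftrightarrow> f \<rho>' \<subseteq> f \<rho>" using ord fH by metis
  qed
  have P3: "\<forall>S'\<subseteq>S. matroid_cl S S' = {s \<in> S. part (S' \<union> {s}) = part S'}"
  proof (intro allI impI)
    fix S' assume S': "S' \<subseteq> S"
    have "Hint S' \<subseteq> H s \<longleftrightarrow> part (S' \<union> {s}) = part S'" if s: "s \<in> S" for s
    proof
      have HU: "Hint (S' \<union> {s}) = Hint S' \<inter> H s" unfolding Hint_def by auto
      have S'': "S' \<union> {s} \<subseteq> S" using S' s by blast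
      {
        assume "Hint S' \<subseteq> H s"
        then have "Hint (S' \<union> {s}) = Hint S'" using HU by blast
        then show "part (S' \<union> {s}) = part S'" using inj[OF S'' S'] by blast
      }
      {
        assume "part (S' \<union> {s}) = part S'"
        then have "Hint (S' \<union> {s}) = Hint S'" using fH[OF S''] fH[OF S'] by metis
        then show "Hint S' \<subseteq> H s" using HU by blast
      }
    qed
    then show "matroid_cl S S' = {s \<in> S. part (S' \<union> {s}) = part S'}"
      unfolding matroid_cl_def by blast
  qed
  show ?thesis using P1 P2 P3 by blast
qed

end
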